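(* Let $x$ be a stable g-matching with $x\ne x^{\max}$, let $w\in W$, and let $(c(1),a(1)),\dots,(c(k),a(k))$ be pairwise edge-disjoint essential $w$-pairs under $x$. Let $I\subseteq\{1,\dots,k\}$ and $z^I:=x_w+\sum_{i\in I}(\mathbf 1^{a(i)}-\mathbf 1^{c(i)})$. Then: (i) $z^I$ is acceptable, i.e. $C_w(z^I)=z^I$; (ii) no edge $e\in U_F^+(x)$ is interesting for $w$ under $z^I$; and (iii) for each $j\in\{1,\dots,k\}\setminus I$, the pair $(c(j),a(j))$ is essential under $z^I$ (with $z^I$ in place of $x_w$ in the definitions of legal and essential $w$-pairs).
   Context: Let $G=(V,E)$ be a finite bipartite graph with color classes $W$ and $F$; the edge joining $w\in W$ and $f\in F$ is written $wf$. Let $b\in\mathbb Z_+^E$ be capacities. For $v\in V$, $E_v$ is the set of edges at $v$, $\mathcal B_v=\{z\in\mathbb Z_+^{E_v}: z\le b|_{E_v}\}$, $\mathbf 1^e$ the unit vector of $e$, $|z|=\sum_e|z(e)|$, $\wedge,\vee$ componentwise min/max. Each $v$ has a choice function $C_v:\mathcal B_v\to\mathcal B_v$ with $C_v(z)\le z$ and, for all $z,z'$: (A1) $z\ge z'\ge C_v(z)\Rightarrow C_v(z')=C_v(z)$; (A2) $z\ge z'\Rightarrow C_v(z)\wedge z'\le C_v(z')$; (A3) $z\ge z'\Rightarrow|C_v(z)|\ge|C_v(z')|$. $z$ is acceptable if $C_v(z)=z$; for distinct acceptable $z,z'$, $z'\prec_v z$ iff $C_v(z\vee z')=z$. $x_v$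 = restriction of $x$ to $E_v$. A g-matching is $x\in\mathbb Z_+^E$, $x\le b$, each $x_v$ acceptable; $x\prec_F y$ (distinct) iff $x_f\preceq_f y_f$ for all $f\in F$. $e\in E_v$ is interesting for $v$ under acceptable $z$ if some $z'\in\mathcal B_v$ has $z'(e)>z(e)$, $z'(e')=z(e')$ for $e'\neq e$, $C_v(z')(e)>z(e)$; $e=wf$ is interesting for $v\in\{w,f\}$ under a g-matching $x$ if so under $x_v$, and blocks $x$ if interesting for both endpoints; stable g-matchings (no blocking edge) form a finite lattice under $\prec_F$ with maximum $x^{\max}$. For stable $x$: $U_F^+(x)$ = edges $wf$ interesting for $f$ under $x$; $U_F^-(x)$ = edges $wf$ with $x(wf)>0$ not interesting for $f$ under $x$. For $w\in W$, a legal $w$-pair under $x$ is $(c,a)$ with $c\in U_F^-(x)\cap E_w$, $a\in U_F^+(x)\cap E_w$ and $C_w(x_w+\mathbf 1^a-\mathbf 1^c)=x_w+\mathbf 1^a-\mathbf 1^c$; it is essential if no $d\in(U_F^+(x)\cap E_w)\setminus\{a\}$ is interesting for $w$ under $x_w+\mathbf 1^a-\mathbf 1^c$. *)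

theory Defs
  imports Main
begin

text \<open>Edges of the bipartite graph are pairs (w,f) with w of type 'w and f of type 'f.
 Vectors indexed by an edge set are functions from edges to nat (vanishing outside the set).\<close>

definition edges_at_W :: "('w \<times> 'f) set \<Rightarrow> 'w \<Rightarrow> ('w \<times> 'f) set" where
  "edges_at_W E w = {e \<in> E. fst e = w}"

definition edges_at_F :: "('w \<times> 'f) set \<Rightarrow> 'f \<Rightarrow> ('w \<times> 'f) set" where
  "edges_at_F E f = {e \<in> E. snd e = f}"

definition inB :: "'e set \<Rightarrow> ('e \<Rightarrow> nat) \<Rightarrow> ('e \<Rightarrow> nat) \<Rightarrow> bool" where
  "inB Ev b z \<longleftrightarrow> (\<forall>e. e \<notin> Ev \<longrightarrow> z e = 0) \<and> (\<forall>e\<in>Ev. z e \<le> b e)"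

definition vnorm :: "'e set \<Rightarrow> ('e \<Rightarrow> nat) \<Rightarrow> nat" where
  "vnorm Ev z = (\<Sum>e\<in>Ev. z e)"

definition choice_fn :: "'e set \<Rightarrow> ('e \<Rightarrow> nat) \<Rightarrow> (('e \<Rightarrow> nat) \<Rightarrow> ('e \<Rightarrow> nat)) \<Rightarrow> bool" where
  "choice_fn Ev b C \<longleftrightarrow>
     (\<forall>z. inB Ev b z \<longrightarrow> inB Ev b (C z) \<and> C z \<le> z) \<and>
     (\<forall>z z'. inB Ev b z \<longrightarrow> inB Ev b z' \<longrightarrow> z \<ge> z' \<longrightarrow> z' \<ge> C z \<longrightarrow> C z' = C z) \<and>
     (\<forall>z z'. inB Ev b z \<longrightarrow> inB Ev b z' \<longrightarrow> z \<ge> z' \<longrightarrow> inf (C z) z' \<le> C z') \<and>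
     (\<forall>z z'. inB Ev b z \<longrightarrow> inB Ev b z' \<longrightarrow> z \<ge> z' \<longrightarrow> vnorm Ev (C z) \<ge> vnorm Ev (C z'))"

definition acceptable :: "(('e \<Rightarrow> nat) \<Rightarrow> ('e \<Rightarrow> nat)) \<Rightarrow> ('e \<Rightarrow> nat) \<Rightarrow> bool" where
  "acceptable C z \<longleftrightarrow> C z = z"

definition pref_v :: "(('e \<Rightarrow> nat) \<Rightarrow> ('e \<Rightarrow> nat)) \<Rightarrow> ('e \<Rightarrow> nat) \<Rightarrow> ('e \<Rightarrow> nat) \<Rightarrow> bool" where
  "pref_v C z' z \<longleftrightarrow> z' \<noteq> z \<and> acceptable C z \<and> acceptable C z' \<and> C (sup z z') = z"

definition weakpref_v :: "(('e \<Rightarrow> nat) \<Rightarrow> ('e \<Rightarrow> nat)) \<Rightarrow> ('e \<Rightarrow> nat) \<Rightarrow> ('e \<Rightarrow> nat) \<Rightarrow> bool" where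
  "weakpref_v C z' z \<longleftrightarrow> z' = z \<or> pref_v C z' z"

definition restr :: "'e set \<Rightarrow> ('e \<Rightarrow> nat) \<Rightarrow> ('e \<Rightarrow> nat)" where
  "restr Ev x = (\<lambda>e. if e \<in> Ev then x e else 0)"

definition interesting :: "'e set \<Rightarrow> ('e \<Rightarrow> nat) \<Rightarrow> (('e \<Rightarrow> nat) \<Rightarrow> ('e \<Rightarrow> nat)) \<Rightarrow> ('e \<Rightarrow> nat) \<Rightarrow> 'e \<Rightarrow> bool" where
  "interesting Ev b C z e \<longleftrightarrow> e \<in> Ev \<and>
     (\<exists>z'. inB Ev b z' \<and> z' e > z e \<and> (\<forall>e'\<in>Ev. e' \<noteq> e \<longrightarrow> z' e' = z e') \<and> C z' e > z e)"

definition gmodel :: "'w set \<Rightarrow> 'f set \<Rightarrow> ('w \<times> 'f) set \<Rightarrow> (('w \<times> 'f) \<Rightarrow> nat)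
    \<Rightarrow> ('w \<Rightarrow> (('w \<times> 'f) \<Rightarrow> nat) \<Rightarrow> (('w \<times> 'f) \<Rightarrow> nat))
    \<Rightarrow> ('f \<Rightarrow> (('w \<times> 'f) \<Rightarrow> nat) \<Rightarrow> (('w \<times> 'f) \<Rightarrow> nat)) \<Rightarrow> bool" where
  "gmodel W F E b CW CF \<longleftrightarrow> finite W \<and> finite F \<and> E \<subseteq> W \<times> F \<and>
     (\<forall>w\<in>W. choice_fn (edges_at_W E w) b (CW w)) \<and>
     (\<forall>f\<in>F. choice_fn (edges_at_F E f) b (CF f))"

definition g_matching where
  "g_matching W F E b CW CF x \<longleftrightarrow>
     (\<forall>e. e \<notin> E \<longrightarrow> x e = 0) \<and> (\<forall>e\<in>E. x e \<le> b e) \<and>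
     (\<forall>w\<in>W. acceptable (CW w) (restr (edges_at_W E w) x)) \<and>
     (\<forall>f\<in>F. acceptable (CF f) (restr (edges_at_F E f) x))"

definition blocks where
  "blocks E b CW CF x e \<longleftrightarrow> e \<in> E \<and>
     interesting (edges_at_W E (fst e)) b (CW (fst e)) (restr (edges_at_W E (fst e)) x) e \<and>
     interesting (edges_at_F E (snd e)) b (CF (snd e)) (restr (edges_at_F E (snd e)) x) e"

definition stable where
  "stable W F E b CW CF x \<longleftrightarrow> g_matching W F E b CW CF x \<and> \<not> (\<exists>e. blocks E b CW CF x e)"

definition pref_F where
  "pref_F F E CF x y \<longleftrightarrow> x \<noteq> y \<and>
     (\<forall>f\<in>F. weakpref_v (CF f) (restr (edges_at_F E f) x) (restr (edges_at_F E f) y))"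

definition is_max_stable where
  "is_max_stable W F E b CW CF xm \<longleftrightarrow> stable W F E b CW CF xm \<and>
     (\<forall>y. stable W F E b CW CF y \<longrightarrow> y = xm \<or> pref_F F E CF y xm)"

definition U_F_plus where
  "U_F_plus E b CF x = {e \<in> E. interesting (edges_at_F E (snd e)) b (CF (snd e)) (restr (edges_at_F E (snd e)) x) e}"

definition U_F_minus where
  "U_F_minus E b CF x = {e \<in> E. x e > 0 \<and>
      \<not> interesting (edges_at_F E (snd e)) b (CF (snd e)) (restr (edges_at_F E (snd e)) x) e}"

text \<open>z + 1^a - 1^c (computed in the integers; nonnegative in all uses).\<close>
definition shift :: "('e \<Rightarrow> nat) \<Rightarrow> 'e \<Rightarrow> 'e \<Rightarrow> ('e \<Rightarrow> nat)" where
  "shift z a c = (\<lambda>e. nat (int (z e) + (if e = a then 1 else 0) - (if e = c then 1 else 0)))"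

text \<open>Legal / essential w-pairs under x, with base vector z in place of x_w
  (the original notions are the case z = x_w).\<close>
definition legal_pair where
  "legal_pair E b CW CF x w z c a \<longleftrightarrow>
     c \<in> U_F_minus E b CF x \<inter> edges_at_W E w \<and> a \<in> U_F_plus E b CF x \<inter> edges_at_W E w \<and>
     CW w (shift z a c) = shift z a c"

definition essential_pair where
  "essential_pair E b CW CF x w z c a \<longleftrightarrow> legal_pair E b CW CF x w z c a \<and>
     \<not> (\<exists>d \<in> (U_F_plus E b CF x \<inter> edges_at_W E w) - {a}.
          interesting (edges_at_W E w) b (CW w) (shift z a c) d)"

end

theory Submission imports Defs begin

lemma cf_le: "choice_fn Ev b C \<Longrightarrow> inB Ev b z \<Longrightarrow> C z \<le> z"
  unfolding choice_fn_def by blast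
lemma cf_B: "choice_fn Ev b C \<Longrightarrow> inB Ev b z \<Longrightarrow> inB Ev b (C z)"
  unfolding choice_fn_def by blast
lemma cf_A1: "choice_fn Ev b C \<Longrightarrow> inB Ev b z \<Longrightarrow> inB Ev b z' \<Longrightarrow> z \<ge> z' \<Longrightarrow> z' \<ge> C z \<Longrightarrow> C z' = C z"
  unfolding choice_fn_def by blast
lemma cf_A2: "choice_fn Ev b C \<Longrightarrow> inB Ev b z \<Longrightarrow> inB Ev b z' \<Longrightarrow> z \<ge> z' \<Longrightarrow> inf (C z) z' \<le> C z'"
  unfolding choice_fn_def by blast
lemma cf_A3: "choice_fn Ev b C \<Longrightarrow> inB Ev b z \<Longrightarrow> inB Ev b z' \<Longrightarrow> z \<ge> z' \<Longrightarrow> vnorm Ev (C z) \<ge> vnorm Ev (C z')"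
  unfolding choice_fn_def by blast

lemma inB_sup: "inB Ev b z \<Longrightarrow> inB Ev b z' \<Longrightarrow> inB Ev b (sup z z')"
  unfolding inB_def by auto

lemma stay:
  assumes cf: "choice_fn Ev b C" and zB: "inB Ev b z" and RB: "inB Ev b R" and le: "z \<le> R"
    and acc: "C z = z"
    and ni: "\<And>e. z e < R e \<Longrightarrow> e \<in> Ev \<and> \<not> interesting Ev b C z e"
  shows "C R = z"
proof -
  have "C R \<le> z"
  proof (rule le_funI)
    fix e
    show "C R e \<le> z e"
    proof (cases "z e < R e")
      case False
      have "C R e \<le> R e" using cf_le[OF cf RB] by (simp add: le_fun_def)
      thus ?thesis using False by simp
    next
      case True
      then have eEv: "e \<in> Ev" and nie: "\<not> interesting Ev b C z e" using ni by auto
      define z' where "z' = z(e := R e)"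
      have z'B: "inB Ev b z'" using zB RB eEv unfolding inB_def z'_def by auto
      have z'R: "z' \<le> R" using le unfolding z'_def le_fun_def by auto
      have c1: "C z' e \<le> z e"
      proof (rule ccontr)
        assume "\<not> C z' e \<le> z e"
        hence "interesting Ev b C z e" unfolding interesting_def using eEv z'B True
          by (intro conjI exI[of _ z']) (auto simp: z'_def)
        thus False using nie by simp
      qed
      have "inf (C R) z' \<le> C z'" using cf_A2[OF cf RB z'B z'R] .
      hence "min (C R e) (z' e) \<le> C z' e" by (simp add: le_fun_def inf_nat_def)
      moreover have "C R e \<le> R e" using cf_le[OF cf RB] by (simp add: le_fun_def)
      ultimately show ?thesis using c1 by (simp add: z'_def min_def split: if_splits)
    qed
  qed
  then have "C z = C R" using cf_A1[OF cf RB zB le] by simp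
  thus ?thesis using acc by simp
qed

definition Zf :: "('e \<Rightarrow> nat) \<Rightarrow> (nat \<Rightarrow> 'e) \<Rightarrow> (nat \<Rightarrow> 'e) \<Rightarrow> nat set \<Rightarrow> 'e \<Rightarrow> nat" where
  "Zf y a c I e = (if e \<in> a ` I then y e + 1 else if e \<in> c ` I then y e - 1 else y e)"

locale ess_setup =
  fixes Ev :: "'e set" and b :: "'e \<Rightarrow> nat" and C :: "('e \<Rightarrow> nat) \<Rightarrow> ('e \<Rightarrow> nat)"
    and y :: "'e \<Rightarrow> nat" and U :: "'e set" and S :: "nat set" and a c :: "nat \<Rightarrow> 'e"
  assumes fin: "finite Ev" and finS: "finite S"
    and cf: "choice_fn Ev b C"
    and yB: "inB Ev b y" and yacc: "C y = y"
    and UEv: "U \<subseteq> Ev"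
    and yU: "\<forall>d\<in>U. \<not> interesting Ev b C y d"
    and aU: "\<forall>j\<in>S. a j \<in> U" and cEv: "\<forall>j\<in>S. c j \<in> Ev" and cU: "\<forall>j\<in>S. c j \<notin> U"
    and cpos: "\<forall>j\<in>S. y (c j) > 0" and ab: "\<forall>j\<in>S. y (a j) < b (a j)"
    and ainj: "inj_on a S" and cinj: "inj_on c S"
    and zacc: "\<forall>j\<in>S. C (Zf y a c {j}) = Zf y a c {j}"
    and zess: "\<forall>j\<in>S. \<forall>d\<in>U - {a j}. \<not> interesting Ev b C (Zf y a c {j}) d"
begin

lemma ac_ne: "i \<in> S \<Longrightarrow> j \<in> S \<Longrightarrow> a i \<noteq> c j"
  using aU cU by metis

lemma aI_Ev: "I \<subseteq> S \<Longrightarrow> a ` I \<subseteq> Ev" using aU UEv by auto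
lemma cI_Ev: "I \<subseteq> S \<Longrightarrow> c ` I \<subseteq> Ev" using cEv by auto
lemma ab': "I \<subseteq> S \<Longrightarrow> e \<in> a ` I \<Longrightarrow> y e < b e" using ab by auto
lemma cpos': "I \<subseteq> S \<Longrightarrow> e \<in> c ` I \<Longrightarrow> y e > 0" using cpos by auto
lemma ac_disj: "I \<subseteq> S \<Longrightarrow> a ` I \<inter> c ` J = {}" if "J \<subseteq> S" using ac_ne that by blast

lemma ZB: assumes "I \<subseteq> S" shows "inB Ev b (Zf y a c I)"
proof -
  have "\<forall>e. e \<notin> Ev \<longrightarrow> Zf y a c I e = 0"
    using yB aI_Ev[OF assms] cI_Ev[OF assms] unfolding inB_def Zf_def by auto
  moreover have "\<forall>e\<in>Ev. Zf y a c I e \<le> b e"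
    using yB ab'[OF assms] unfolding inB_def Zf_def by (auto simp: Suc_le_eq)
  ultimately show ?thesis unfolding inB_def by blast
qed

lemma Za: "I \<subseteq> S \<Longrightarrow> e \<in> a ` I \<Longrightarrow> Zf y a c I e = y e + 1" unfolding Zf_def by simp
lemma Zc: "I \<subseteq> S \<Longrightarrow> e \<in> c ` I \<Longrightarrow> Zf y a c I e = y e - 1"
  unfolding Zf_def using ac_disj[of I I] by auto
lemma Zo: "e \<notin> a ` I \<Longrightarrow> e \<notin> c ` I \<Longrightarrow> Zf y a c I e = y e" unfolding Zf_def by simp
lemma Zle_y: "e \<notin> a ` I \<Longrightarrow> Zf y a c I e \<le> y e" unfolding Zf_def by simp

lemma Zf_cmp:
  assumes IS: "I \<subseteq> S" and j: "j \<in> I" and lt: "Zf y a c {j} e < Zf y a c I e"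
  shows "e \<in> a ` I \<and> e \<noteq> a j"
proof -
  have jS: "j \<in> S" using IS j by auto
  have "e \<in> a ` I"
  proof (rule ccontr)
    assume n: "e \<notin> a ` I"
    hence ne: "e \<noteq> a j" using j by auto
    show False
    proof (cases "e = c j")
      case True
      then show False using lt Zc[OF IS, of e] Zc[of "{j}" e] jS j by auto
    next
      case False
      hence "Zf y a c {j} e = y e" using ne by (simp add: Zf_def)
      then show False using lt Zle_y[OF n] by simp
    qed
  qed
  moreover have "e \<noteq> a j"
  proof
    assume "e = a j"
    then show False using lt Za[OF IS, of e] Za[of "{j}" e] j jS by auto
  qed
  ultimately show ?thesis by blast
qed

lemma LB:
  assumes IS: "I \<subseteq> S" and z'B: "inB Ev b z'" and Zle: "Zf y a c I \<le> z'"
    and up: "\<And>e. Zf y a c I e < z' e \<Longrightarrow> e \<in> U"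
  shows "C (sup y z') = y" and "\<And>e. z' e = Zf y a c I e \<Longrightarrow> Zf y a c I e \<le> C z' e"
proof -
  show Cs: "C (sup y z') = y"
  proof (rule stay[OF cf yB inB_sup[OF yB z'B] _ yacc])
    show "y \<le> sup y z'" by simp
    fix e assume "y e < sup y z' e"
    hence lt: "y e < z' e" by (simp add: sup_nat_def max_def split: if_splits)
    have "e \<in> U"
    proof (cases "Zf y a c I e < z' e")
      case True then show ?thesis using up by blast
    next
      case False
      hence "Zf y a c I e = z' e" using Zle by (simp add: le_fun_def) (meson le_neq_implies_less)
      hence "e \<in> a ` I" using lt Zle_y by (metis not_le)
      then show ?thesis using aU IS by auto
    qed
    then show "e \<in> Ev \<and> \<not> interesting Ev b C y e" using UEv yU by auto
  qed
  fix e assume eq: "z' e = Zf y a c I e"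
  show "Zf y a c I e \<le> C z' e"
  proof (cases "e \<in> a ` I")
    case True
    then obtain j where j: "j \<in> I" and ej: "e = a j" by auto
    have jS: "j \<in> S" using j IS by auto
    have jB: "inB Ev b (Zf y a c {j})" using ZB jS by simp
    have CR: "C (sup (Zf y a c {j}) z') = Zf y a c {j}"
    proof (rule stay[OF cf jB inB_sup[OF jB z'B] _ ])
      show "Zf y a c {j} \<le> sup (Zf y a c {j}) z'" by simp
      show "C (Zf y a c {j}) = Zf y a c {j}" using zacc jS by blast
      fix e' assume "Zf y a c {j} e' < sup (Zf y a c {j}) z' e'"
      hence lt: "Zf y a c {j} e' < z' e'" by (simp add: sup_nat_def max_def split: if_splits)
      have "e' \<in> U - {a j}"
      proof (cases "Zf y a c I e' < z' e'")
        case True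
        hence "e' \<in> U" using up by blast
        moreover have "e' \<noteq> a j" using True eq ej by auto
        ultimately show ?thesis by blast
      next
        case False
        hence "Zf y a c I e' = z' e'" using Zle by (simp add: le_fun_def) (meson le_neq_implies_less)
        hence "Zf y a c {j} e' < Zf y a c I e'" using lt by simp
        hence "e' \<in> a ` I \<and> e' \<noteq> a j" using Zf_cmp[OF IS j] by blast
        then show ?thesis using aU IS by auto
      qed
      then show "e' \<in> Ev \<and> \<not> interesting Ev b C (Zf y a c {j}) e'"
        using UEv zess jS by blast
    qed
    have "inf (C (sup (Zf y a c {j}) z')) z' \<le> C z'"
      using cf_A2[OF cf inB_sup[OF jB z'B] z'B] by simp
    hence "min (Zf y a c {j} e) (z' e) \<le> C z' e" using CR by (simp add: le_fun_def inf_nat_def)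
    moreover have "Zf y a c {j} e = Zf y a c I e" using Za[OF IS True] Za[of "{j}" e] jS ej by simp
    ultimately show ?thesis using eq by simp
  next
    case False
    have "inf (C (sup y z')) z' \<le> C z'"
      using cf_A2[OF cf inB_sup[OF yB z'B] z'B] by simp
    hence "min (y e) (z' e) \<le> C z' e" using Cs by (simp add: le_fun_def inf_nat_def)
    then show ?thesis using eq Zle_y[OF False] by simp
  qed
qed

lemma sum_ind: "A \<subseteq> Ev \<Longrightarrow> (\<Sum>e\<in>Ev. (if e \<in> A then 1 else 0::nat)) = card A"
proof -
  assume A: "A \<subseteq> Ev"
  have "(\<Sum>e\<in>Ev. (if e \<in> A then 1 else 0::nat)) = (\<Sum>e\<in>Ev \<inter> {e. e \<in> A}. 1) + (\<Sum>e\<in>Ev \<inter> - {e. e \<in> A}. 0)"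
    by (rule sum.If_cases[OF fin])
  also have "Ev \<inter> {e. e \<in> A} = A" using A by auto
  finally show ?thesis by simp
qed

lemma Znorm: assumes IS: "I \<subseteq> S" shows "vnorm Ev (Zf y a c I) = vnorm Ev y"
proof -
  have pw: "Zf y a c I e + (if e \<in> c ` I then 1 else 0) = y e + (if e \<in> a ` I then 1 else 0)" for e
    using ac_disj[OF IS IS] cpos'[OF IS, of e] unfolding Zf_def by auto
  have "(\<Sum>e\<in>Ev. Zf y a c I e + (if e \<in> c ` I then 1 else 0)) = (\<Sum>e\<in>Ev. y e + (if e \<in> a ` I then 1 else 0))"
    using pw by simp
  hence "vnorm Ev (Zf y a c I) + card (c ` I) = vnorm Ev y + card (a ` I)"
    unfolding vnorm_def sum.distrib using sum_ind[OF aI_Ev[OF IS]] sum_ind[OF cI_Ev[OF IS]] by simp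
  moreover have "card (c ` I) = card (a ` I)"
    using card_image[OF inj_on_subset[OF ainj IS]] card_image[OF inj_on_subset[OF cinj IS]] by simp
  ultimately show ?thesis by simp
qed

lemma main: assumes IS: "I \<subseteq> S"
  shows "C (Zf y a c I) = Zf y a c I \<and> (\<forall>d\<in>U. \<not> interesting Ev b C (Zf y a c I) d)"
proof
  let ?Z = "Zf y a c I"
  have ZB': "inB Ev b ?Z" using ZB IS by simp
  have "?Z \<le> C ?Z"
    using LB(2)[OF IS ZB' order_refl] by (simp add: le_fun_def)
  then show "C ?Z = ?Z" using cf_le[OF cf ZB'] by (simp add: antisym)
  show "\<forall>d\<in>U. \<not> interesting Ev b C ?Z d"
  proof (intro ballI notI)
    fix d assume dU: "d \<in> U" and "interesting Ev b C ?Z d"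
    then obtain z' where dEv: "d \<in> Ev" and z'B: "inB Ev b z'" and gt: "z' d > ?Z d"
      and eqo: "\<forall>e'\<in>Ev. e' \<noteq> d \<longrightarrow> z' e' = ?Z e'" and Cgt: "C z' d > ?Z d"
      unfolding interesting_def by blast
    have eqall: "e \<noteq> d \<Longrightarrow> z' e = ?Z e" for e
      using eqo z'B ZB' unfolding inB_def by (cases "e \<in> Ev") auto
    have Zle: "?Z \<le> z'" using eqall gt by (simp add: le_fun_def) (metis less_imp_le order_refl)
    have up: "?Z e < z' e \<Longrightarrow> e \<in> U" for e using eqall dU by (cases "e = d") auto
    note L = LB[OF IS z'B Zle up]
    have low: "e \<noteq> d \<Longrightarrow> ?Z e \<le> C z' e" for e using L(2) eqall by metis
    have "vnorm Ev (C z') = C z' d + (\<Sum>e\<in>Ev - {d}. C z' e)"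
      unfolding vnorm_def using fin dEv by (simp add: sum.remove)
    also have "\<dots> \<ge> ?Z d + 1 + (\<Sum>e\<in>Ev - {d}. ?Z e)"
      using Cgt low by (intro add_mono sum_mono) auto
    also have "?Z d + 1 + (\<Sum>e\<in>Ev - {d}. ?Z e) = vnorm Ev ?Z + 1"
      unfolding vnorm_def using fin dEv by (simp add: sum.remove)
    finally have "vnorm Ev (C z') \<ge> vnorm Ev y + 1" using Znorm[OF IS] by simp
    moreover have "vnorm Ev (C (sup y z')) \<ge> vnorm Ev (C z')"
      using cf_A3[OF cf inB_sup[OF yB z'B] z'B] by simp
    ultimately show False using L(1) by simp
  qed
qed

lemma Zins: assumes jS: "j \<in> S" and IS: "I \<subseteq> S" and jI: "j \<notin> I"
  shows "Zf y a c (insert j I) = shift (Zf y a c I) (a j) (c j)"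
proof
  fix e
  have ajI: "a j \<notin> a ` I" using ainj jS IS jI by (auto dest: inj_onD)
  have cjI: "c j \<notin> c ` I" using cinj jS IS jI by (auto dest: inj_onD)
  have ajc: "a j \<notin> c ` (insert j I)" "c j \<notin> a ` (insert j I)" using ac_disj[of "insert j I" "insert j I"] IS jS by auto
  have pos: "y (c j) > 0" using cpos jS by auto
  show "Zf y a c (insert j I) e = shift (Zf y a c I) (a j) (c j) e"
  proof (cases "e = a j")
    case True then show ?thesis using ajI ajc unfolding Zf_def shift_def by auto
  next
    case False
    show ?thesis
    proof (cases "e = c j")
      case True then show ?thesis using False cjI ajc pos unfolding Zf_def shift_def by auto
    next
      case False2: False
      then show ?thesis using False unfolding Zf_def shift_def by auto
    qed
  qed
qed

lemma Zsum: assumes IS: "I \<subseteq> S"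
  shows "Zf y a c I e = nat (int (y e) + (\<Sum>i\<in>I. (if e = a i then 1 else 0) - (if e = c i then 1 else 0)))"
proof -
  have finI: "finite I" using finS IS finite_subset by blast
  let ?f = "\<lambda>i. (if e = a i then 1 else 0) - (if e = c i then (1::int) else 0)"
  show ?thesis
  proof (cases "e \<in> a ` I")
    case True
    then obtain j where j: "j \<in> I" and ej: "e = a j" by auto
    have jS: "j \<in> S" using j IS by auto
    have "(\<Sum>i\<in>I. ?f i) = ?f j + (\<Sum>i\<in>I - {j}. ?f i)" using finI j by (simp add: sum.remove)
    also have "(\<Sum>i\<in>I - {j}. ?f i) = 0"
    proof (rule sum.neutral, rule ballI)
      fix i assume i: "i \<in> I - {j}"
      have "a j \<noteq> a i" using ainj jS i IS by (auto dest: inj_onD)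
      moreover have "a j \<noteq> c i" using ac_ne jS i IS by auto
      ultimately show "?f i = 0" using ej by simp
    qed
    also have "?f j = 1" using ej ac_ne[OF jS jS] by simp
    finally show ?thesis using Za[OF IS True] by simp
  next
    case False
    show ?thesis
    proof (cases "e \<in> c ` I")
      case True
      then obtain j where j: "j \<in> I" and ej: "e = c j" by auto
      have jS: "j \<in> S" using j IS by auto
      have "(\<Sum>i\<in>I. ?f i) = ?f j + (\<Sum>i\<in>I - {j}. ?f i)" using finI j by (simp add: sum.remove)
      also have "(\<Sum>i\<in>I - {j}. ?f i) = 0"
      proof (rule sum.neutral, rule ballI)
        fix i assume i: "i \<in> I - {j}"
        have "c j \<noteq> c i" using cinj jS i IS by (auto dest: inj_onD)
        moreover have "a i \<noteq> c j" using ac_ne jS i IS by auto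
        ultimately show "?f i = 0" using ej by auto
      qed
      also have "?f j = -1" using ej ac_ne[OF jS jS] by auto
      finally show ?thesis using Zc[OF IS True] cpos jS ej by simp
    next
      case False2: False
      have "(\<Sum>i\<in>I. ?f i) = 0"
        by (rule sum.neutral) (use False False2 in auto)
      then show ?thesis using Zo[OF False False2] by simp
    qed
  qed
qed

end

theorem corollary3p8:
  fixes W :: "'w set" and F :: "'f set" and E :: "('w \<times> 'f) set"
    and b :: "('w \<times> 'f) \<Rightarrow> nat"
    and CW :: "'w \<Rightarrow> (('w \<times> 'f) \<Rightarrow> nat) \<Rightarrow> (('w \<times> 'f) \<Rightarrow> nat)"
    and CF :: "'f \<Rightarrow> (('w \<times> 'f) \<Rightarrow> nat) \<Rightarrow> (('w \<times> 'f) \<Rightarrow> nat)"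
    and x xmax :: "('w \<times> 'f) \<Rightarrow> nat" and w :: 'w and k :: nat
    and c a :: "nat \<Rightarrow> ('w \<times> 'f)" and I :: "nat set"
  assumes model: "gmodel W F E b CW CF"
    and stab: "stable W F E b CW CF x"
    and xmax: "is_max_stable W F E b CW CF xmax"
    and ne: "x \<noteq> xmax"
    and wW: "w \<in> W"
    and ess: "\<forall>i\<in>{1..k}. essential_pair E b CW CF x w (restr (edges_at_W E w) x) (c i) (a i)"
    and disj: "\<forall>i\<in>{1..k}. \<forall>j\<in>{1..k}. i \<noteq> j \<longrightarrow> {c i, a i} \<inter> {c j, a j} = {}"
    and I: "I \<subseteq> {1..k}"
  defines "zI \<equiv> (\<lambda>e. nat (int (restr (edges_at_W E w) x e)
                   + (\<Sum>i\<in>I. (if e = a i then 1 else 0) - (if e = c i then 1 else 0))))"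
  shows "CW w zI = zI \<and>
         (\<forall>e\<in>U_F_plus E b CF x. \<not> interesting (edges_at_W E w) b (CW w) zI e) \<and>
         (\<forall>j\<in>{1..k} - I. essential_pair E b CW CF x w zI (c j) (a j))"
proof -
  define Ev where "Ev = edges_at_W E w"
  define y where "y = restr Ev x"
  define U where "U = U_F_plus E b CF x \<inter> Ev"
  define S where "S = {1..k::nat}"
  have EvE: "Ev \<subseteq> E" unfolding Ev_def edges_at_W_def by auto
  have finE: "finite E" using model unfolding gmodel_def by (meson finite_SigmaI finite_subset)
  have fin: "finite Ev" using finite_subset[OF EvE finE] .
  have cf: "choice_fn Ev b (CW w)" using model wW unfolding gmodel_def Ev_def by blast
  have gm: "g_matching W F E b CW CF x" using stab unfolding stable_def by blast
  have yB: "inB Ev b y" using gm EvE unfolding g_matching_def inB_def y_def restr_def by auto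
  have yacc: "CW w y = y" using gm wW unfolding g_matching_def acceptable_def y_def Ev_def by blast
  have yU: "\<forall>d\<in>U. \<not> interesting Ev b (CW w) y d"
  proof (intro ballI notI)
    fix d assume dU: "d \<in> U" and int: "interesting Ev b (CW w) y d"
    have fd: "fst d = w" using dU unfolding U_def Ev_def edges_at_W_def by auto
    have "blocks E b CW CF x d"
      using dU int fd unfolding blocks_def U_def U_F_plus_def y_def Ev_def by auto
    then show False using stab unfolding stable_def by blast
  qed
  have essS: "\<forall>j\<in>S. essential_pair E b CW CF x w y (c j) (a j)"
    using ess unfolding S_def y_def Ev_def by blast
  have aU: "\<forall>j\<in>S. a j \<in> U" using essS unfolding essential_pair_def legal_pair_def U_def Ev_def by blast
  have cEv: "\<forall>j\<in>S. c j \<in> Ev" using essS unfolding essential_pair_def legal_pair_def Ev_def by blast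
  have cU: "\<forall>j\<in>S. c j \<notin> U" using essS unfolding essential_pair_def legal_pair_def U_def U_F_plus_def U_F_minus_def by blast
  have cpos: "\<forall>j\<in>S. y (c j) > 0"
    using essS cEv unfolding essential_pair_def legal_pair_def U_F_minus_def y_def restr_def by auto
  have ab: "\<forall>j\<in>S. y (a j) < b (a j)"
  proof
    fix j assume jS: "j \<in> S"
    have aP: "a j \<in> U_F_plus E b CF x" and aEv: "a j \<in> Ev" using aU jS unfolding U_def by auto
    then obtain z' where "inB (edges_at_F E (snd (a j))) b z'"
      and "z' (a j) > restr (edges_at_F E (snd (a j))) x (a j)"
      unfolding U_F_plus_def interesting_def by blast
    moreover have "a j \<in> edges_at_F E (snd (a j))" using aEv EvE unfolding edges_at_F_def by auto
    ultimately show "y (a j) < b (a j)" using aEv unfolding inB_def restr_def y_def by fastforce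
  qed
  have ainj: "inj_on a S" using disj unfolding S_def inj_on_def by blast
  have cinj: "inj_on c S" using disj unfolding S_def inj_on_def by blast
  have shift1: "shift y (a j) (c j) = Zf y a c {j}" if jS: "j \<in> S" for j
  proof
    fix e
    have "a j \<noteq> c j" using aU cU jS by metis
    then show "shift y (a j) (c j) e = Zf y a c {j} e"
      using cpos jS unfolding shift_def Zf_def by auto
  qed
  have zacc: "\<forall>j\<in>S. CW w (Zf y a c {j}) = Zf y a c {j}"
    using essS shift1 unfolding essential_pair_def legal_pair_def by metis
  have zess: "\<forall>j\<in>S. \<forall>d\<in>U - {a j}. \<not> interesting Ev b (CW w) (Zf y a c {j}) d"
    using essS shift1 unfolding essential_pair_def U_def Ev_def by auto
  interpret L: ess_setup Ev b "CW w" y U S a c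
    by (unfold_locales) (use fin cf yB yacc yU aU cEv cU cpos ab ainj cinj zacc zess in
        \<open>auto simp: S_def U_def\<close>)
  have IS: "I \<subseteq> S" using I S_def by simp
  have zIeq: "zI = Zf y a c I"
    unfolding zI_def using L.Zsum[OF IS] by (auto simp: y_def Ev_def)
  have M: "CW w (Zf y a c J) = Zf y a c J \<and> (\<forall>d\<in>U_F_plus E b CF x. \<not> interesting Ev b (CW w) (Zf y a c J) d)"
    if JS: "J \<subseteq> S" for J
    using L.main[OF JS] unfolding U_def interesting_def by blast
  show ?thesis
  proof (intro conjI ballI)
    show "CW w zI = zI" using M[OF IS] zIeq by simp
    show "\<not> interesting (edges_at_W E w) b (CW w) zI e" if "e \<in> U_F_plus E b CF x" for e
      using M[OF IS] zIeq that unfolding Ev_def by simp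
    fix j assume j: "j \<in> {1..k} - I"
    have jS: "j \<in> S" and jI: "j \<notin> I" using j S_def by auto
    have ins: "shift zI (a j) (c j) = Zf y a c (insert j I)"
      using L.Zins[OF jS IS jI] zIeq by simp
    have JS: "insert j I \<subseteq> S" using jS IS by simp
    show "essential_pair E b CW CF x w zI (c j) (a j)"
      using essS jS M[OF JS] ins unfolding essential_pair_def legal_pair_def Ev_def by auto
  qed
qed
end
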